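(* Let $a,b,c,d,P_{\max}>0$ and set $\alpha=d(1+bP_{\max})$. Consider the frontier curve $\Phi_2$, given as the graph of $$f(r_1)=\log_2\!\left(1+\frac{cP_{\max}}{1+\frac{d}{a}(1+bP_{\max})(2^{r_1}-1)}\right),\qquad r_1\ge 0 .$$ Let $P_1=\frac1a(1+bP_{\max})(2^{r_1}-1)$ be the corresponding power of user 1. Then $$\operatorname{sign}\big(f''(r_1)\big)=\operatorname{sign}\Big((\alpha+adP_1)^2-(a-\alpha)(a-\alpha+acP_{\max})\Big)=\operatorname{sign}(P_1-Q_1),$$ where the inflection threshold is $$Q_1=\frac{\Re\!\left(\sqrt{(a-\alpha)(a-\alpha+acP_{\max})}\right)-\alpha}{ad}.$$ In particular, $\Phi_2$ restricted to $P_1\in[0,P_{\max}]$ is concave if $Q_1\ge P_{\max}$ and convex if $Q_1\le 0$. If $0<Q_1<P_{\max}$, it is concave for $P_1\in[0,Q_1]$ and convex for $P_1\in[Q_1,P_{\max}]$.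
   Context: The channel power gains are normalized by the noise variance: $a$ (direct gain of user 1), $b$ (interference gain from transmitter 2 at receiver 1), $c$ (direct gain of user 2), $d$ (interference gain from transmitter 1 at receiver 2). The rates are $R_1(P_1,P_2)=\log_2\!\left(1+\frac{aP_1}{1+bP_2}\right)$ and $R_2(P_1,P_2)=\log_2\!\left(1+\frac{cP_2}{1+dP_1}\right)$. The curve $\Phi_2$ is the set of rate pairs obtained with $P_2=P_{\max}$ and $P_1$ ranging over $[0,P_{\max}]$. $\Re$ denotes the real part, and the square root of a negative number is purely imaginary. *)

theory Defs
  imports "HOL-Analysis.Analysis"
begin

definition alpha_par :: "real \<Rightarrow> real \<Rightarrow> real \<Rightarrow> real" where
  "alpha_par b d Pmax = d * (1 + b * Pmax)"

definition frontier_f :: "real \<Rightarrow> real \<Rightarrow> real \<Rightarrow> real \<Rightarrow> real \<Rightarrow> real \<Rightarrow> real" where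
  "frontier_f a b c d Pmax r1 =
     log 2 (1 + c * Pmax / (1 + (d / a) * (1 + b * Pmax) * (2 powr r1 - 1)))"

text \<open>Power of user 1 corresponding to rate r1 (with P2 = Pmax)\<close>
definition power1 :: "real \<Rightarrow> real \<Rightarrow> real \<Rightarrow> real \<Rightarrow> real" where
  "power1 a b Pmax r1 = (1 / a) * (1 + b * Pmax) * (2 powr r1 - 1)"

text \<open>Inflection threshold; Re of the complex square root (purely imaginary for negative radicand)\<close>
definition Q1 :: "real \<Rightarrow> real \<Rightarrow> real \<Rightarrow> real \<Rightarrow> real \<Rightarrow> real" where
  "Q1 a b c d Pmax =
     (Re (csqrt (complex_of_real ((a - alpha_par b d Pmax) * (a - alpha_par b d Pmax + a * c * Pmax))))
       - alpha_par b d Pmax) / (a * d)"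

end

theory Submission
  imports Defs
begin

definition FF :: "real \<Rightarrow> real \<Rightarrow> real \<Rightarrow> real" where
  "FF K C r = ln (1 + C / (1 + K * (exp (r * ln 2) - 1))) / ln 2"
definition F1 :: "real \<Rightarrow> real \<Rightarrow> real \<Rightarrow> real" where
  "F1 K C r = - C * K * exp (r * ln 2) / ((1 + K * (exp (r * ln 2) - 1)) * ((1 + K * (exp (r * ln 2) - 1)) + C))"
definition F2 :: "real \<Rightarrow> real \<Rightarrow> real \<Rightarrow> real" where
  "F2 K C r = C * K * exp (r * ln 2) * ln 2 * (K^2 * (exp (r * ln 2))^2 - (1-K)*(1-K+C))
     / ((1 + K * (exp (r * ln 2) - 1)) * ((1 + K * (exp (r * ln 2) - 1)) + C))^2"

lemma alg2:
  fixes x L K C :: real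
  assumes "1 + K * (x - 1) \<noteq> 0" "1 + K * (x - 1) + C \<noteq> 0"
  shows "(C * K * x * (x * L * K * (1 + K * (x - 1) + C) + x * L * K * (1 + K * (x - 1))) -
      x * L * (C * K) * ((1 + K * (x - 1)) * (1 + K * (x - 1) + C))) /
     ((1 + K * (x - 1)) * (1 + K * (x - 1) + C) * ((1 + K * (x - 1)) * (1 + K * (x - 1) + C)))
   = C * K * x * L * (K^2 * x^2 - (1-K)*(1-K+C)) / ((1 + K * (x - 1)) * ((1 + K * (x - 1)) + C))^2"
  using assms by (simp add: power2_eq_square algebra_simps)

lemma alg1:
  fixes x K C D :: real
  assumes "D > 0" "C > 0"
  shows "- (C * (x * K) / ((1 + C / D) * (D * D)))
    = - C * K * x / (D * (D + C))"
proof -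
  have "(1 + C / D) * (D * D) = D * (D + C)"
    using assms by (simp add: field_simps)
  then show ?thesis by (simp add: mult.commute mult.left_commute)
qed

lemma FF_deriv:
  assumes "1 + K * (exp (r * ln 2) - 1) > 0" "C > 0"
  shows "(FF K C has_real_derivative F1 K C r) (at r)"
proof -
  let ?D = "1 + K * (exp (r * ln 2) - 1)"
  have D: "?D > 0" using assms by simp
  have p: "1 + C / ?D > 0" using D assms by (simp add: add_pos_pos)
  show ?thesis unfolding FF_def
    apply (auto intro!: derivative_eq_intros)
    using p apply simp
    using D apply simp
    unfolding F1_def using D assms by (intro alg1) auto
qed

lemma F1_deriv:
  assumes "1 + K * (exp (r * ln 2) - 1) > 0" "C > 0"
  shows "(F1 K C has_real_derivative F2 K C r) (at r)"
proof -
  let ?D = "1 + K * (exp (r * ln 2) - 1)"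
  have D: "?D > 0" "?D + C > 0" using assms by auto
  show ?thesis unfolding F1_def
    apply (rule derivative_eq_intros refl)+
    using D apply simp
    unfolding F2_def using alg2[of K "exp (r * ln 2)" C "ln 2"] D by simp
qed
lemma sgn_pos_mult: "(p::real) > 0 \<Longrightarrow> sgn (p * z) = sgn z"
  by (simp add: sgn_mult)

lemma key_sign:
  fixes a b c d P r :: real
  assumes "a > 0" "b > 0" "c > 0" "d > 0" "P > 0" "r \<ge> 0"
  shows "sgn (F2 (d/a*(1+b*P)) (c*P) r) = sgn ((alpha_par b d P + a * d * power1 a b P r)\<^sup>2
                - (a - alpha_par b d P) * (a - alpha_par b d P + a * c * P))"
    and "sgn ((alpha_par b d P + a * d * power1 a b P r)\<^sup>2
                - (a - alpha_par b d P) * (a - alpha_par b d P + a * c * P))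
         = sgn (power1 a b P r - Q1 a b c d P)"
proof -
  define K where "K = d/a*(1+b*P)"
  define C where "C = c*P"
  define x where "x = exp (r * ln 2)"
  define al where "al = alpha_par b d P"
  define R where "R = (a - al) * (a - al + a * c * P)"
  have K: "K > 0" using assms by (simp add: K_def add_pos_pos)
  have C: "C > 0" using assms by (simp add: C_def)
  have x1: "x \<ge> 1" using assms by (simp add: x_def)
  have pw: "2 powr r = x" by (simp add: powr_def x_def)
  have alK: "al = a * K" using assms by (simp add: al_def alpha_par_def K_def)
  have al0: "al > 0" using alK K assms by simp
  have hP: "power1 a b P r = (al * x - al) / (a * d)"
    using assms unfolding power1_def pw al_def alpha_par_def by (simp add: field_simps)
  have hal: "al + a * d * power1 a b P r = al * x"
    using assms unfolding hP by (simp add: field_simps)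
  define D where "D = 1 + K * (x - 1)"
  have D: "D > 0" using K x1 by (simp add: D_def add_pos_nonneg)
  have F2e: "F2 K C r = (C * K * x * ln 2 / (D * (D + C))^2) * (K^2 * x^2 - (1-K)*(1-K+C))"
    unfolding F2_def x_def[symmetric] D_def by simp
  have pos: "C * K * x * ln 2 / (D * (D + C))^2 > 0" using C K x1 D by simp
  have Ye: "(al * x)^2 - R = a^2 * (K^2 * x^2 - (1-K)*(1-K+C))"
    unfolding R_def alK C_def by (simp add: algebra_simps power2_eq_square)
  show "sgn (F2 (d/a*(1+b*P)) (c*P) r) = sgn ((alpha_par b d P + a * d * power1 a b P r)\<^sup>2
                - (a - alpha_par b d P) * (a - alpha_par b d P + a * c * P))"
    unfolding K_def[symmetric] C_def[symmetric] al_def[symmetric] R_def[symmetric] hal Ye F2e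
    using pos assms by (simp only: sgn_pos_mult zero_less_power)
  have "sgn ((al * x)^2 - R) = sgn (power1 a b P r - Q1 a b c d P)"
  proof (cases "R \<ge> 0")
    case True
    have q: "Q1 a b c d P = (sqrt R - al) / (a * d)"
      unfolding Q1_def al_def[symmetric] R_def[symmetric] using True by (simp add: csqrt_of_real)
    have d1: "power1 a b P r - Q1 a b c d P = (al * x - sqrt R) / (a * d)"
      unfolding q hP using assms by (simp add: field_simps)
    have y1: "(al * x)^2 - R = (al * x - sqrt R) * (al * x + sqrt R)"
      using True by (simp add: algebra_simps power2_eq_square)
    have "al * x > 0" using al0 x1 by simp
    then have "al * x + sqrt R > 0" using True by (simp add: add_pos_nonneg)
    then show ?thesis unfolding d1 y1 using assms by (simp add: sgn_mult sgn_divide)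
  next
    case False
    have q: "Q1 a b c d P = (0 - al) / (a * d)"
      unfolding Q1_def al_def[symmetric] R_def[symmetric] using False by simp
    have d1: "power1 a b P r - Q1 a b c d P = (al * x) / (a * d)"
      unfolding q hP using assms by (simp add: field_simps)
    have "(al * x)^2 - R > 0" using False by (smt (verit) zero_le_power2)
    moreover have "(al * x) / (a * d) > 0" using al0 x1 assms by simp
    ultimately show ?thesis unfolding d1 by (metis sgn_pos)
  qed
  then show "sgn ((alpha_par b d P + a * d * power1 a b P r)\<^sup>2
                - (a - alpha_par b d P) * (a - alpha_par b d P + a * c * P))
         = sgn (power1 a b P r - Q1 a b c d P)"
    unfolding al_def[symmetric] R_def[symmetric] hal .
qed
lemma power1_mono: "a > 0 \<Longrightarrow> b > 0 \<Longrightarrow> P > 0 \<Longrightarrow> r \<le> s \<Longrightarrow> power1 a b P r \<le> power1 a b P s"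
  unfolding power1_def by (intro mult_left_mono diff_right_mono powr_mono) (auto simp: add_pos_pos)

lemma convex_set1:
  assumes "\<And>r s. r \<le> s \<Longrightarrow> p r \<le> (p s::real)"
  shows "convex {r::real. 0 \<le> r \<and> lo \<le> p r \<and> p r \<le> hi}"
  unfolding is_interval_convex_1[symmetric] is_interval_1
  using assms by (auto intro: order_trans)

lemma convex_set2:
  assumes "\<And>r s. r \<le> s \<Longrightarrow> p r \<le> (p s::real)"
  shows "convex {r::real. 0 \<le> r \<and> p r \<le> hi}"
  unfolding is_interval_convex_1[symmetric] is_interval_1
  using assms by (auto intro: order_trans)

theorem mainTheorem6:
  fixes a b c d Pmax :: real
  assumes "a > 0" and "b > 0" and "c > 0" and "d > 0" and "Pmax > 0"
  shows
   "(\<forall>r1 \<ge> 0.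
       sgn (deriv (deriv (frontier_f a b c d Pmax)) r1)
         = sgn ((alpha_par b d Pmax + a * d * power1 a b Pmax r1)\<^sup>2
                - (a - alpha_par b d Pmax) * (a - alpha_par b d Pmax + a * c * Pmax))
     \<and> sgn ((alpha_par b d Pmax + a * d * power1 a b Pmax r1)\<^sup>2
                - (a - alpha_par b d Pmax) * (a - alpha_par b d Pmax + a * c * Pmax))
         = sgn (power1 a b Pmax r1 - Q1 a b c d Pmax))
    \<and> (Q1 a b c d Pmax \<ge> Pmax \<longrightarrow>
         concave_on {r1. 0 \<le> r1 \<and> power1 a b Pmax r1 \<le> Pmax} (frontier_f a b c d Pmax))
    \<and> (Q1 a b c d Pmax \<le> 0 \<longrightarrow>
         convex_on {r1. 0 \<le> r1 \<and> power1 a b Pmax r1 \<le> Pmax} (frontier_f a b c d Pmax))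
    \<and> (0 < Q1 a b c d Pmax \<and> Q1 a b c d Pmax < Pmax \<longrightarrow>
         concave_on {r1. 0 \<le> r1 \<and> power1 a b Pmax r1 \<le> Q1 a b c d Pmax} (frontier_f a b c d Pmax)
       \<and> convex_on {r1. 0 \<le> r1 \<and> Q1 a b c d Pmax \<le> power1 a b Pmax r1 \<and> power1 a b Pmax r1 \<le> Pmax}
           (frontier_f a b c d Pmax))"
proof -
  define K where "K = d/a*(1+b*Pmax)"
  define C where "C = c*Pmax"
  have K: "K > 0" using assms by (simp add: K_def add_pos_pos)
  have C: "C > 0" using assms by (simp add: C_def)
  have hf: "frontier_f a b c d Pmax = FF K C"
    by (rule ext) (simp add: frontier_f_def FF_def K_def C_def log_def powr_def)
  define S where "S = {r. 0 < 1 + K * (exp (r * ln 2) - 1)}"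
  have Sopen: "open S" unfolding S_def by (intro open_Collect_less continuous_intros)
  have S0: "r \<in> S" if "r \<ge> 0" for r
  proof -
    have "exp (r * ln 2) \<ge> 1" using that by simp
    then show ?thesis unfolding S_def using K by (simp add: add_pos_nonneg)
  qed
  have d1: "(FF K C has_real_derivative F1 K C r) (at r)" if "r \<in> S" for r
    using FF_deriv[of K r C] that C unfolding S_def by simp
  have d2: "(F1 K C has_real_derivative F2 K C r) (at r)" if "r \<in> S" for r
    using F1_deriv[of K r C] that C unfolding S_def by simp
  have dd: "deriv (deriv (FF K C)) r = F2 K C r" if "r \<in> S" for r
  proof -
    have "(deriv (FF K C) has_real_derivative F2 K C r) (at r)"
      by (rule has_field_derivative_transform_within_open[OF d2[OF that] Sopen that])
         (simp add: DERIV_imp_deriv[OF d1])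
    then show ?thesis by (rule DERIV_imp_deriv)
  qed
  have sg: "sgn (F2 K C r) = sgn (power1 a b Pmax r - Q1 a b c d Pmax)" if "r \<ge> 0" for r
    using key_sign[OF assms that] unfolding K_def C_def by simp
  have mono: "\<And>r s. r \<le> s \<Longrightarrow> power1 a b Pmax r \<le> power1 a b Pmax s"
    using power1_mono assms by blast
  have le0: "F2 K C r \<le> 0" if "r \<ge> 0" "power1 a b Pmax r \<le> Q1 a b c d Pmax" for r
  proof -
    have "sgn (F2 K C r) \<le> 0" using sg[OF that(1)] that(2) by (simp add: sgn_real_def)
    then show ?thesis by (simp add: sgn_real_def split: if_splits)
  qed
  have ge0: "F2 K C r \<ge> 0" if "r \<ge> 0" "power1 a b Pmax r \<ge> Q1 a b c d Pmax" for r
  proof -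
    have "sgn (F2 K C r) \<ge> 0" using sg[OF that(1)] that(2) by (simp add: sgn_real_def)
    then show ?thesis by (simp add: sgn_real_def split: if_splits)
  qed
  have conc: "concave_on {r. 0 \<le> r \<and> power1 a b Pmax r \<le> hi} (FF K C)"
    if "hi \<le> Q1 a b c d Pmax" for hi
    by (rule f''_le0_imp_concave[where f'="F1 K C" and f''="F2 K C"])
       (use convex_set2[OF mono] d1 d2 S0 le0 that in auto)
  have conv: "convex_on {r. 0 \<le> r \<and> lo \<le> power1 a b Pmax r \<and> power1 a b Pmax r \<le> hi} (FF K C)"
    if "Q1 a b c d Pmax \<le> lo" for lo hi
    by (rule f''_ge0_imp_convex[where f'="F1 K C" and f''="F2 K C"])
       (use convex_set1[OF mono] d1 d2 S0 ge0 that in auto)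
  have conv2: "convex_on {r. 0 \<le> r \<and> power1 a b Pmax r \<le> Pmax} (FF K C)"
    if "Q1 a b c d Pmax \<le> 0"
  proof -
    have "{r. 0 \<le> r \<and> power1 a b Pmax r \<le> Pmax} = {r. 0 \<le> r \<and> 0 \<le> power1 a b Pmax r \<and> power1 a b Pmax r \<le> Pmax}"
      using mono[of 0] assms by (auto simp: power1_def)
    then show ?thesis using conv[OF that] by simp
  qed
  show ?thesis
    unfolding hf
    using key_sign[OF assms] dd S0 conc conv conv2 unfolding K_def C_def by auto
qed

end
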